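(* Consider the shard-based blockchain game with uniform (equal) reward sharing described in the context, and assume $\tau < n$. Then the strategy profile in which every one of the $N$ processors plays Cooperate ($C$), called All-C, is not a Nash equilibrium.
   Context: There are $N$ processors partitioned into $k$ shards (committees), each containing $n = N/k$ processors. In a given epoch each processor $P_i$ in shard $j$ holds a finite set (vector) $x_i^j$ of transactions to verify. Fixed parameters: mandatory cost $c^m>0$ (already paid by every processor), fixed optional cost $c^f>0$, per-transaction verification cost $c^v>0$, per-transaction fee reward $r>0$, block reward $BR>0$, and a consensus threshold $\tau$, an integer with $1\le \tau\le n$. Each processor simultaneously chooses a strategy in $\{C, D\}$ (Cooperate or Defect). Let $l_j$ be the number of cooperating processors in shard $j$. Shard $j$ reaches consensus iff $l_j\ge\tau$, in which case it outputs a fixed nonempty set $y^j$ of transactions; a new block is appended iff every shard reaches consensus. Uniform reward sharing: if the block is appended, each processor receives $S=\frac{BR + r\sum_{j=1}^k |y^j|}{N}$, otherwise $S=0$. The payoff of a cooperating processor $P_i$ in shard $j$ is $S-(c^m+c^f+|x_i^j|c^v)$, and that of a defecting processor is $S-c^m$. A Nash equilibrium is a strategy profile in which no processor can strictly increase its payoff by unilaterally changing its strategy. *)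

theory Defs
  imports Complex_Main
begin

text \<open>Processors are indexed by pairs (j, i) with shard index j < k and
  position i < n inside the shard; N = k * n.
  A strategy profile is s :: nat \<Rightarrow> nat \<Rightarrow> bool, where s j i = True means
  processor i of shard j plays Cooperate (C) and False means Defect (D).\<close>

definition num_coop :: "nat \<Rightarrow> (nat \<Rightarrow> nat \<Rightarrow> bool) \<Rightarrow> nat \<Rightarrow> nat" where
  "num_coop n s j = card {i. i < n \<and> s j i}"

definition block_appended ::
  "nat \<Rightarrow> nat \<Rightarrow> nat \<Rightarrow> (nat \<Rightarrow> nat \<Rightarrow> bool) \<Rightarrow> bool" where
  "block_appended k n \<tau> s \<longleftrightarrow> (\<forall>j<k. num_coop n s j \<ge> \<tau>)"

definition share ::
  "nat \<Rightarrow> nat \<Rightarrow> nat \<Rightarrow> real \<Rightarrow> real \<Rightarrow> (nat \<Rightarrow> 'a set) \<Rightarrow> (nat \<Rightarrow> nat \<Rightarrow> bool) \<Rightarrow> real" where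
  "share k n \<tau> BR r y s =
     (if block_appended k n \<tau> s
      then (BR + r * (\<Sum>j<k. real (card (y j)))) / real (k * n)
      else 0)"

definition payoff ::
  "nat \<Rightarrow> nat \<Rightarrow> nat \<Rightarrow> real \<Rightarrow> real \<Rightarrow> real \<Rightarrow> real \<Rightarrow> real \<Rightarrow>
   (nat \<Rightarrow> nat \<Rightarrow> 'a set) \<Rightarrow> (nat \<Rightarrow> 'a set) \<Rightarrow> (nat \<Rightarrow> nat \<Rightarrow> bool) \<Rightarrow> nat \<Rightarrow> nat \<Rightarrow> real" where
  "payoff k n \<tau> cm cf cv r BR x y s j i =
     (if s j i
      then share k n \<tau> BR r y s - (cm + cf + real (card (x j i)) * cv)
      else share k n \<tau> BR r y s - cm)"

definition is_nash ::
  "nat \<Rightarrow> nat \<Rightarrow> nat \<Rightarrow> real \<Rightarrow> real \<Rightarrow> real \<Rightarrow> real \<Rightarrow> real \<Rightarrow>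
   (nat \<Rightarrow> nat \<Rightarrow> 'a set) \<Rightarrow> (nat \<Rightarrow> 'a set) \<Rightarrow> (nat \<Rightarrow> nat \<Rightarrow> bool) \<Rightarrow> bool" where
  "is_nash k n \<tau> cm cf cv r BR x y s \<longleftrightarrow>
     (\<forall>j<k. \<forall>i<n. \<forall>a::bool.
        payoff k n \<tau> cm cf cv r BR x y (s(j := (s j)(i := a))) j i
          \<le> payoff k n \<tau> cm cf cv r BR x y s j i)"

end

theory Submission
  imports Defs
begin

theorem theorem2:
  fixes k n \<tau> :: nat
    and cm cf cv r BR :: real
    and x :: "nat \<Rightarrow> nat \<Rightarrow> 'a set"
    and y :: "nat \<Rightarrow> 'a set"
  assumes "k \<ge> 1" and "n \<ge> 1"
    and "cm > 0" and "cf > 0" and "cv > 0" and "r > 0" and "BR > 0"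
    and "1 \<le> \<tau>" and "\<tau> \<le> n"
    and "\<forall>j<k. \<forall>i<n. finite (x j i)"
    and "\<forall>j<k. finite (y j) \<and> y j \<noteq> {}"
    and "\<tau> < n"
  shows "\<not> is_nash k n \<tau> cm cf cv r BR x y (\<lambda>j i. True)"
proof
  let ?s = "\<lambda>j i. True"
  let ?s' = "?s(0 := (?s 0)(0 := False))"
  assume N: "is_nash k n \<tau> cm cf cv r BR x y ?s"
  have ba1: "block_appended k n \<tau> ?s"
    using assms unfolding block_appended_def num_coop_def by simp
  have ba2: "block_appended k n \<tau> ?s'"
    unfolding block_appended_def num_coop_def
  proof (intro allI impI)
    fix j assume "j < k"
    have "{1..<n} \<subseteq> {i. i < n \<and> ?s' j i}" by auto
    then have "card {1..<n} \<le> card {i. i < n \<and> ?s' j i}"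
      by (intro card_mono) auto
    then show "\<tau> \<le> card {i. i < n \<and> ?s' j i}" using assms by simp
  qed
  have sh: "share k n \<tau> BR r y ?s' = share k n \<tau> BR r y ?s"
    using ba1 ba2 unfolding share_def by simp
  have "payoff k n \<tau> cm cf cv r BR x y ?s' 0 0 \<le> payoff k n \<tau> cm cf cv r BR x y ?s 0 0"
    using N assms unfolding is_nash_def by force
  then have "share k n \<tau> BR r y ?s - cm \<le> share k n \<tau> BR r y ?s - (cm + cf + real (card (x 0 0)) * cv)"
    unfolding payoff_def using sh by simp
  moreover have "real (card (x 0 0)) * cv \<ge> 0" using assms by simp
  ultimately show False using assms by linarith
qed

end
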